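(* Let $n\in\mathbb{N}$. Then $R_{\mathcal{S}^*_{Ne,n}}(\mathcal{W}_n)=\left(\dfrac{2}{3n+\sqrt{9n^2+4}}\right)^{1/n}$, and this radius is sharp, attained by $f(z)=z(1+z^n)/(1-z^n)$.
   Context: $\mathbb{D}=\{|z|<1\}$, $\mathbb{D}_r=\{|z|<r\}$. For $n\in\mathbb{N}$, $\mathcal{A}_n$ is the class of analytic functions on $\mathbb{D}$ of the form $f(z)=z+\sum_{k\ge n+1}a_kz^k$; for such $f$ let $\mathcal{Q}_f(z)=zf'(z)/f(z)$. $\mathcal{P}_n$ is the class of analytic $p(z)=1+\sum_{k\ge n}p_kz^k$ on $\mathbb{D}$ with $\mathrm{Re}\,p(z)>0$. $\mathcal{W}_n=\{f\in\mathcal{A}_n: f(z)/z\in\mathcal{P}_n\}$. Let $\varphi_{Ne}(z)=1+z-z^3/3$ (univalent on $\mathbb{D}$), $\Omega_{Ne}=\varphi_{Ne}(\mathbb{D})$, $\mathcal{S}^*_{Ne}$ the set of $f$ ($f(0)=0,f'(0)=1$) with $\mathcal{Q}_f\prec\varphi_{Ne}$ (i.e. $\mathcal{Q}_f=\varphi_{Ne}\circ w$, $w:\mathbb{D}\to\mathbb{D}$ analytic, $w(0)=0$), $\mathcal{S}^*_{Ne,n}=\mathcal{S}^*_{Ne}\cap\mathcal{A}_n$. For $\mathcal{G}\subset\mathcal{A}_n$, $R_{\mathcal{S}^*_{Ne,n}}(\mathcal{G})$ is the largest $\rho\in(0,1]$ such that $\mathcal{Q}_f(\mathbb{D}_\rho)\subseteq\Omega_{Ne}$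 for all $f\in\mathcal{G}$. Sharpness means the stated $f$ lies in $\mathcal{W}_n$ and $\mathcal{Q}_f(\partial\mathbb{D}_\rho)\cap\partial\Omega_{Ne}\ne\emptyset$. *)

theory Defs
  imports "HOL-Analysis.Analysis"
begin

definition A_class :: "nat \<Rightarrow> (complex \<Rightarrow> complex) set" where
  "A_class n = {f. f holomorphic_on ball 0 1 \<and> f 0 = 0 \<and> deriv f 0 = 1 \<and>
                   (\<forall>k. 2 \<le> k \<and> k \<le> n \<longrightarrow> (deriv ^^ k) f 0 = 0)}"

definition P_class :: "nat \<Rightarrow> (complex \<Rightarrow> complex) set" where
  "P_class n = {p. p holomorphic_on ball 0 1 \<and> p 0 = 1 \<and>
                   (\<forall>k. 1 \<le> k \<and> k < n \<longrightarrow> (deriv ^^ k) p 0 = 0) \<and>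
                   (\<forall>z\<in>ball 0 1. Re (p z) > 0)}"

text \<open>W_n = {f in A_n : f(z)/z in P_n}; the function f(z)/z is meant with its removable
  singularity at 0 filled in, i.e. f(z) = z p(z) for some p in P_n.\<close>
definition W_class :: "nat \<Rightarrow> (complex \<Rightarrow> complex) set" where
  "W_class n = {f. f \<in> A_class n \<and> (\<exists>p\<in>P_class n. \<forall>z\<in>ball 0 1. f z = z * p z)}"

text \<open>Q_f(z) = z f'(z)/f(z), with its removable singularity at 0 filled by the value 1.\<close>
definition Qf :: "(complex \<Rightarrow> complex) \<Rightarrow> complex \<Rightarrow> complex" where
  "Qf f z = (if z = 0 then 1 else z * deriv f z / f z)"

definition phiNe :: "complex \<Rightarrow> complex" where
  "phiNe z = 1 + z - z ^ 3 / 3"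

definition OmegaNe :: "complex set" where
  "OmegaNe = phiNe ` ball 0 1"

definition radius_SNe :: "(complex \<Rightarrow> complex) set \<Rightarrow> real \<Rightarrow> bool" where
  "radius_SNe G \<rho> \<longleftrightarrow>
     (let S = {r. 0 < r \<and> r \<le> 1 \<and> (\<forall>f\<in>G. Qf f ` ball 0 r \<subseteq> OmegaNe)}
      in \<rho> \<in> S \<and> (\<forall>r\<in>S. r \<le> \<rho>))"

end

theory Submission
  imports Defs "HOL-Complex_Analysis.Complex_Analysis"
begin

lemma cube_contr:
  fixes z u :: complex
  assumes "norm z \<le> r" "norm u \<le> r" "0 \<le> r"
  shows "norm (z^3 - u^3) \<le> 3 * r^2 * norm (z - u)"
proof -
  have "z^3 - u^3 = (z - u) * (z^2 + z*u + u^2)" by (simp add: algebra_simps power2_eq_square power3_eq_cube)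
  moreover have "norm (z^2 + z*u + u^2) \<le> 3 * r^2"
  proof -
    have "norm (z^2 + z*u + u^2) \<le> norm z ^2 + norm z * norm u + norm u ^2"
      by (metis norm_triangle_le norm_power norm_mult add_mono order_refl)
    also have "\<dots> \<le> r^2 + r*r + r^2"
      by (intro add_mono power_mono mult_mono) (use assms in auto)
    finally show ?thesis by (simp add: power2_eq_square)
  qed
  ultimately show ?thesis
    by (simp add: norm_mult mult.commute mult_left_mono)
qed

lemma disc_in_Omega:
  fixes c :: complex
  assumes "norm c < 2/3"
  shows "1 + c \<in> OmegaNe"
proof -
  define d where "d = 2/3 - norm c"
  have d0: "0 < d" "d \<le> 2/3" using assms by (auto simp: d_def)
  define e where "e = min (1/2) d"
  have e: "0 < e" "e \<le> 1/2" "e \<le> d" using d0 by (auto simp: e_def)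
  define r where "r = 1 - e"
  have r: "0 < r" "r < 1" using e by (auto simp: r_def)
  have "r - r^3/3 = 2/3 - e^2 + e^3/3" unfolding r_def by (simp add: power2_eq_square power3_eq_cube field_simps)
  moreover have "e^2 \<le> d"
  proof -
    have "e^2 \<le> e * 1" using e by (simp add: power2_eq_square mult_left_mono)
    thus ?thesis using e by simp
  qed
  moreover have "0 \<le> e^3" using e by simp
  ultimately have key: "norm c + r^3/3 \<le> r" unfolding d_def by linarith
  define T where "T = (\<lambda>z::complex. c + z^3/3)"
  have "continuous_on (cball 0 r) T" unfolding T_def by (intro continuous_intros) auto
  moreover have "T \<in> cball 0 r \<rightarrow> cball 0 r"
  proof
    fix z :: complex assume "z \<in> cball 0 r"
    hence z: "norm z \<le> r" by simp
    have "norm (T z) \<le> norm c + norm z^3/3"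
      unfolding T_def using norm_triangle_ineq[of c "z^3/3"] by (simp add: norm_divide norm_power)
    also have "\<dots> \<le> norm c + r^3/3" using z power_mono[of "norm z" r 3] by simp
    finally show "T z \<in> cball 0 r" using key by simp
  qed
  ultimately obtain z where z: "z \<in> cball 0 r" "T z = z" using brouwer_ball[OF r(1)] by blast
  have "norm z < 1" using z r by simp
  moreover have "phiNe z = 1 + c"
    using z(2) unfolding T_def phiNe_def by (simp add: algebra_simps)
  ultimately show ?thesis unfolding OmegaNe_def by force
qed

lemma Omega_real:
  fixes x :: real
  assumes "x \<le> 1/3"
  shows "complex_of_real x \<notin> OmegaNe"
proof
  assume "complex_of_real x \<in> OmegaNe"
  then obtain z where z: "norm z < 1" "phiNe z = complex_of_real x" unfolding OmegaNe_def by auto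
  obtain a b where ab: "z = Complex a b" by (cases z)
  have a1: "a^2 < 1"
  proof -
    have "a^2 \<le> a^2 + b^2" by simp
    also have "a^2 + b^2 = norm z ^ 2" by (simp add: ab cmod_power2)
    also have "\<dots> < 1" using z(1) by (simp add: power_less_one_iff abs_less_iff)
    finally show ?thesis .
  qed
  have "Im (phiNe z) = b * (1 - a^2 + b^2/3)"
    by (simp add: phiNe_def ab power2_eq_square power3_eq_cube field_simps)
  hence "b * (1 - a^2 + b^2/3) = 0" using z(2) by simp
  moreover have "1 - a^2 + b^2/3 > 0" using a1 by (simp add: add_pos_nonneg)
  ultimately have b0: "b = 0" by simp
  have "Re (phiNe z) = 1 + a - a^3/3"
    by (simp add: phiNe_def ab b0 power2_eq_square power3_eq_cube algebra_simps)
  hence ex: "1 + a - a^3/3 = x" using z(2) by simp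
  have "\<bar>a\<bar> < 1" using a1 by (simp add: abs_square_less_1)
  hence am: "-1 < a" "a < 1" by linarith+
  have "1 + a - a^3/3 - 1/3 = (a+1)^2 * (2 - a) / 3"
    by (simp add: power2_eq_square power3_eq_cube field_simps) 
  moreover have "(a+1)^2 * (2 - a) / 3 > 0" using am by (intro divide_pos_pos mult_pos_pos) auto
  ultimately show False using ex assms by linarith
qed

lemma third_frontier: "complex_of_real (1/3) \<in> frontier OmegaNe"
proof -
  have nin: "complex_of_real (1/3) \<notin> OmegaNe" by (rule Omega_real) simp
  have cont: "continuous_on (closure (ball (0::complex) 1)) phiNe" unfolding phiNe_def by (intro continuous_intros) auto
  have "phiNe ` closure (ball 0 1) \<subseteq> closure OmegaNe"
    by (rule image_closure_subset[OF cont closed_closure]) (auto simp: OmegaNe_def intro: closure_subset[THEN subsetD])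
  moreover have "(-1::complex) \<in> closure (ball 0 1)" by simp
  moreover have "phiNe (-1) = complex_of_real (1/3)" by (simp add: phiNe_def)
  ultimately have "complex_of_real (1/3) \<in> closure OmegaNe" by (metis imageI subsetD)
  moreover have "complex_of_real (1/3) \<notin> interior OmegaNe" using nin interior_subset by blast
  ultimately show ?thesis by (simp add: frontier_def)
qed

lemma hd_power_zero:
  assumes "i < m"
  shows "(deriv ^^ i) (\<lambda>w::complex. w ^ m) 0 = 0"
  using higher_deriv_power[of i 0 m 0] assms by (simp add: zero_power)

lemma hd_zpow_mult:
  fixes h :: "complex \<Rightarrow> complex"
  assumes h: "h holomorphic_on S" and S: "open S" "0 \<in> S" and k: "k < m"
  shows "(deriv ^^ k) (\<lambda>w. w ^ m * h w) 0 = 0"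
proof -
  have "(deriv ^^ k) (\<lambda>w. w ^ m * h w) 0 =
      (\<Sum>i = 0..k. of_nat (k choose i) * (deriv ^^ i) (\<lambda>w. w^m) 0 * (deriv ^^ (k-i)) h 0)"
    by (rule higher_deriv_mult[OF _ h S]) (intro holomorphic_intros)
  also have "\<dots> = 0" using k by (intro sum.neutral) (auto simp: hd_power_zero)
  finally show ?thesis .
qed

lemma hd_cong_ball:
  assumes "\<And>z. z \<in> ball 0 r \<Longrightarrow> f z = g z" "0 < r"
  shows "(deriv ^^ k) f 0 = (deriv ^^ k) g (0::complex)"
proof (rule higher_deriv_cong_ev[OF _ refl])
  have "eventually (\<lambda>z. z \<in> ball (0::complex) r) (nhds 0)"
    using assms(2) by (intro eventually_nhds_in_open) auto
  thus "eventually (\<lambda>z. f z = g z) (nhds 0)" by eventually_elim (use assms in auto)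
qed

lemma factor_zpow:
  fixes g :: "complex \<Rightarrow> complex"
  assumes "g holomorphic_on ball 0 1" "\<And>k. k < m \<Longrightarrow> (deriv ^^ k) g 0 = 0"
  shows "\<exists>h. h holomorphic_on ball 0 1 \<and> (\<forall>z\<in>ball 0 1. g z = z ^ m * h z)"
  using assms
proof (induction m arbitrary: g)
  case 0
  then show ?case by auto
next
  case (Suc m)
  have g0: "g 0 = 0" using Suc.prems(2)[of 0] by simp
  define h1 where "h1 z = (if z = 0 then deriv g 0 else g z / z)" for z
  have h1hol: "h1 holomorphic_on ball 0 1"
    by (rule pole_theorem_open_0[OF Suc.prems(1), of 0]) (auto simp: h1_def g0)
  have geq: "g z = z * h1 z" if "z \<in> ball 0 1" for z
    using g0 by (auto simp: h1_def)
  have "(deriv ^^ k) h1 0 = 0" if k: "k < m" for k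
  proof -
    have "(deriv ^^ Suc k) g 0 = (deriv ^^ Suc k) (\<lambda>w. w * h1 w) 0"
      by (rule hd_cong_ball[OF geq]) auto
    also have "\<dots> = (\<Sum>i = 0..Suc k. of_nat (Suc k choose i) * (deriv ^^ i) (\<lambda>w. w) 0 * (deriv ^^ (Suc k - i)) h1 0)"
      by (rule higher_deriv_mult[OF _ h1hol]) (auto intro: holomorphic_intros)
    also have "\<dots> = (\<Sum>i \<in> {1}. of_nat (Suc k choose i) * (deriv ^^ i) (\<lambda>w. w) 0 * (deriv ^^ (Suc k - i)) h1 0)"
      by (intro sum.mono_neutral_right) auto
    also have "\<dots> = of_nat (Suc k) * (deriv ^^ k) h1 0" by simp
    finally have "of_nat (Suc k) * (deriv ^^ k) h1 0 = 0" using Suc.prems(2)[of "Suc k"] k by simp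
    thus ?thesis by (simp del: of_nat_Suc)
  qed
  then obtain h where h: "h holomorphic_on ball 0 1" "\<forall>z\<in>ball 0 1. h1 z = z ^ m * h z"
    using Suc.IH[OF h1hol] by blast
  show ?case using h geq by (intro exI[of _ h]) auto
qed

definition f0 :: "nat \<Rightarrow> complex \<Rightarrow> complex" where
  "f0 n = (\<lambda>z. z * (1 + z ^ n) / (1 - z ^ n))"

lemma one_minus_pow_nz:
  fixes z :: complex assumes "norm z < 1" "n \<ge> 1"
  shows "1 - z ^ n \<noteq> 0"
proof
  assume "1 - z^n = 0"
  hence "norm (z^n) = 1" by (metis norm_one right_minus_eq)
  moreover have "norm (z^n) < 1" using assms by (simp add: norm_power power_less_one_iff)
  ultimately show False by simp
qed

lemma Re_cayley_pos:
  fixes u :: complex assumes "norm u < 1"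
  shows "Re ((1 + u) / (1 - u)) > 0"
proof -
  have nz: "1 - u \<noteq> 0" using assms by auto
  have "Re ((1 + u) / (1 - u)) = (1 - (norm u)^2) / (norm (1 - u))^2"
    by (cases u) (simp add: Re_divide cmod_power2 algebra_simps, simp add: power2_eq_square)
  moreover have "1 - (norm u)^2 > 0" using assms by (simp add: power_less_one_iff abs_less_iff)
  ultimately show ?thesis using nz by simp
qed

lemma f0_in_W:
  assumes n: "n \<ge> 1"
  shows "f0 n \<in> W_class n"
proof -
  define B where "B = ball (0::complex) 1"
  have nz: "\<And>z. z \<in> B \<Longrightarrow> 1 - z ^ n \<noteq> 0" using one_minus_pow_nz n by (auto simp: B_def)
  define h where "h = (\<lambda>z::complex. 2 / (1 - z ^ n))"
  have hhol: "h holomorphic_on B" unfolding h_def using nz by (intro holomorphic_intros) auto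
  have Bo: "open B" "0 \<in> B" by (auto simp: B_def)
  have fhol: "f0 n holomorphic_on B" unfolding f0_def using nz by (intro holomorphic_intros) auto
  have feq: "f0 n z = z + z ^ (n+1) * h z" if "z \<in> ball 0 1" for z
    using nz[of z] that by (simp add: f0_def h_def B_def field_simps)
  have hdf: "(deriv ^^ k) (f0 n) 0 = (if k = 1 then 1 else 0)" if "1 \<le> k" "k \<le> n" for k
  proof -
    have "(deriv ^^ k) (f0 n) 0 = (deriv ^^ k) (\<lambda>z. z + z ^ (n+1) * h z) 0"
      by (rule hd_cong_ball[OF feq]) auto
    also have "\<dots> = (deriv ^^ k) (\<lambda>z. z) 0 + (deriv ^^ k) (\<lambda>z. z ^ (n+1) * h z) 0"
      by (rule higher_deriv_add[OF _ _ Bo]) (auto intro!: holomorphic_intros hhol)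
    also have "(deriv ^^ k) (\<lambda>z. z ^ (n+1) * h z) 0 = 0"
      using that by (intro hd_zpow_mult[OF hhol Bo]) auto
    finally show ?thesis using that by simp
  qed
  have fA: "f0 n \<in> A_class n"
    unfolding A_class_def using fhol hdf[of 1] hdf n by (auto simp: B_def f0_def)
  define p where "p = (\<lambda>z::complex. (1 + z ^ n) / (1 - z ^ n))"
  have phol: "p holomorphic_on B" unfolding p_def using nz by (intro holomorphic_intros) auto
  have peq: "p z = 1 + z ^ n * h z" if "z \<in> ball 0 1" for z
    using nz[of z] that by (simp add: p_def h_def B_def field_simps)
  have hdp: "(deriv ^^ k) p 0 = 0" if "1 \<le> k" "k < n" for k
  proof -
    have "(deriv ^^ k) p 0 = (deriv ^^ k) (\<lambda>z. 1 + z ^ n * h z) 0"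
      by (rule hd_cong_ball[OF peq]) auto
    also have "\<dots> = (deriv ^^ k) (\<lambda>z. 1) 0 + (deriv ^^ k) (\<lambda>z. z ^ n * h z) 0"
      by (rule higher_deriv_add[OF _ _ Bo]) (auto intro!: holomorphic_intros hhol)
    also have "(deriv ^^ k) (\<lambda>z. z ^ n * h z) 0 = 0"
      using that by (intro hd_zpow_mult[OF hhol Bo]) auto
    finally show ?thesis using that by simp
  qed
  have pre: "Re (p z) > 0" if "z \<in> ball 0 1" for z
    unfolding p_def using that n by (intro Re_cayley_pos) (simp add: norm_power power_less_one_iff)
  have pP: "p \<in> P_class n"
    unfolding P_class_def using phol hdp pre n by (auto simp: B_def p_def power_0_left)
  show ?thesis unfolding W_class_def using fA pP
    by (auto intro!: bexI[of _ p] simp: f0_def p_def)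
qed

lemma Qf_f0:
  fixes z :: complex
  assumes n: "n \<ge> 1" and z: "norm z < 1" "z \<noteq> 0" "1 + z ^ n \<noteq> 0"
  shows "Qf (f0 n) z = 1 + 2 * of_nat n * z ^ n / (1 - z ^ (2*n))"
proof -
  have nz: "1 - z ^ n \<noteq> 0" using one_minus_pow_nz z n by auto
  have zn2: "z ^ (n - Suc 0) * z = z^n" using n by (simp add: power_eq_if[of z n])
  define w where "w = z^n"
  have "(f0 n has_field_derivative ((1 + w) / (1 - w) + 2 * of_nat n * w / (1 - w)^2)) (at z)"
  proof -
    define P where "P = (\<lambda>z::complex. z^n)"
    have dP: "(P has_field_derivative (of_nat n * w / z)) (at z)"
    proof -
      have "(P has_field_derivative (of_nat n * z^(n-1))) (at z)" unfolding P_def by (rule derivative_eq_intros refl | simp)+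
      moreover have "z^(n-1) = w / z" using z(2) n by (simp add: w_def power_diff)
      ultimately show ?thesis by simp
    qed
    have fe: "f0 n = (\<lambda>z. z * (1 + P z) / (1 - P z))" by (simp add: f0_def P_def)
    have Pz: "P z = w" by (simp add: P_def w_def)
    have nzw: "1 - w \<noteq> 0" using nz by (simp add: w_def)
    show ?thesis unfolding fe using nzw z(2)
      apply (auto intro!: derivative_eq_intros dP simp: Pz)
      using nzw by (simp add: power2_eq_square divide_simps) (simp add: algebra_simps)
  qed
  hence d': "deriv (f0 n) z = (1 + w) / (1 - w) + 2 * of_nat n * w / (1 - w)^2"
    by (rule DERIV_imp_deriv)
  have e2: "1 - z^(2*n) = (1 - w) * (1 + w)" by (simp add: w_def power_mult power2_eq_square algebra_simps)
  have w1: "1 - w \<noteq> 0" "1 + w \<noteq> 0" using nz z by (auto simp: w_def)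
  have "Qf (f0 n) z = z * deriv (f0 n) z / (z * (1 + w) / (1 - w))"
    using z by (simp add: Qf_def f0_def w_def)
  also have "\<dots> = 1 + 2 * of_nat n * w / ((1 - w) * (1 + w))"
    unfolding d' using w1 z by (simp add: power2_eq_square divide_simps)
  finally show ?thesis by (simp add: e2 w_def)
qed

lemma norm_lt1_denom_nz:
  fixes a z :: complex assumes "norm a < 1" "norm z < 1"
  shows "1 + cnj a * z \<noteq> 0"
proof
  assume "1 + cnj a * z = 0"
  hence "norm (cnj a * z) = 1" by (metis add.inverse_unique norm_minus_cancel norm_one)
  moreover have "norm (cnj a * z) < 1"
  proof -
    have "norm a * norm z \<le> norm a" using assms by (simp add: mult_left_le)
    thus ?thesis using assms by (simp add: norm_mult)
  qed
  ultimately show False by simp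
qed

lemma Schwarz_Pick_deriv:
  fixes F :: "complex \<Rightarrow> complex"
  assumes hol: "F holomorphic_on ball 0 1" and F1: "\<And>z. norm z < 1 \<Longrightarrow> norm (F z) < 1"
    and a: "norm a < 1"
  shows "norm (deriv F a) * (1 - (norm a)^2) \<le> 1 - (norm (F a))^2"
proof -
  define b where "b = F a"
  have b: "norm b < 1" using F1 a by (simp add: b_def)
  define T where "T = (\<lambda>\<zeta>::complex. (\<zeta> + a) / (1 + cnj a * \<zeta>))"
  define M where "M = (\<lambda>u::complex. (u - b) / (1 - cnj b * u))"
  have TM: "T = Moebius_function 0 (-a)" unfolding T_def Moebius_function_def by (auto simp: fun_eq_iff)
  have MM: "M = Moebius_function 0 b" unfolding M_def Moebius_function_def by (auto simp: fun_eq_iff)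
  have Thol: "T holomorphic_on ball 0 1" unfolding TM using a by (intro Moebius_function_holomorphic) simp
  have Mhol: "M holomorphic_on ball 0 1" unfolding MM using b by (intro Moebius_function_holomorphic) simp
  have Tin: "T ` ball 0 1 \<subseteq> ball 0 1" unfolding TM using a Moebius_function_norm_lt_1[of "-a"] by auto
  have Fin: "F ` ball 0 1 \<subseteq> ball 0 1" using F1 by auto
  define \<psi> where "\<psi> = (\<lambda>\<zeta>. M (F (T \<zeta>)))"
  have \<psi>hol: "\<psi> holomorphic_on ball 0 1"
  proof -
    have "(F \<circ> T) holomorphic_on ball 0 1" by (rule holomorphic_on_compose_gen[OF Thol hol Tin])
    moreover have "(F \<circ> T) ` ball 0 1 \<subseteq> ball 0 1" using Tin Fin by auto
    ultimately have "(M \<circ> (F \<circ> T)) holomorphic_on ball 0 1" by (rule holomorphic_on_compose_gen[OF _ Mhol])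
    thus ?thesis by (simp add: \<psi>_def o_def)
  qed
  have T0: "T 0 = a" by (simp add: T_def)
  have \<psi>0: "\<psi> 0 = 0" by (simp add: \<psi>_def T0 M_def b_def)
  have \<psi>1: "norm (\<psi> z) < 1" if "norm z < 1" for z
  proof -
    have "T z \<in> ball 0 1" using Tin that by (auto simp: image_subset_iff)
    hence "norm (T z) < 1" by simp
    hence "norm (F (T z)) < 1" by (rule F1)
    thus ?thesis unfolding \<psi>_def MM using b by (intro Moebius_function_norm_lt_1)
  qed
  have sch: "norm (deriv \<psi> 0) \<le> 1" using Schwarz_Lemma(2)[OF \<psi>hol \<psi>0 \<psi>1, of 0] by simp
  have na: "a * cnj a = of_real ((norm a)^2)" by (rule complex_norm_square[symmetric])
  have nb: "cnj b * b = of_real ((norm b)^2)" by (simp only: mult.commute[of "cnj b"] complex_norm_square)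
  have a2: "(norm a)^2 < 1" using a by (simp add: power_less_one_iff)
  have b2: "(norm b)^2 < 1" using b by (simp add: power_less_one_iff)
  have dT: "(T has_field_derivative (1 - a * cnj a)) (at 0)"
    unfolding T_def by (auto intro!: derivative_eq_intros simp: algebra_simps)
  have dF: "(F has_field_derivative deriv F a) (at (T 0))"
    unfolding T0 using hol a by (intro holomorphic_derivI) auto
  have nzb: "1 - cnj b * b \<noteq> 0" unfolding nb using b2
    by (metis less_irrefl of_real_1 of_real_diff of_real_eq_0_iff right_minus_eq)
  have dM: "(M has_field_derivative (1 / (1 - cnj b * b))) (at (F (T 0)))"
  proof -
    have "(M has_field_derivative ((1 - cnj b * b) + cnj b * (b - b)) / (1 - cnj b * b)^2) (at b)"
      unfolding M_def using nzb by (auto intro!: derivative_eq_intros simp: algebra_simps power2_eq_square)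
    moreover have "((1 - cnj b * b) + cnj b * (b - b)) / (1 - cnj b * b)^2 = 1 / (1 - cnj b * b)"
      using nzb by (simp add: power2_eq_square)
    ultimately show ?thesis by (simp add: T0 b_def)
  qed
  have "(\<psi> has_field_derivative (1 / (1 - cnj b * b)) * (deriv F a * (1 - a * cnj a))) (at 0)"
    unfolding \<psi>_def by (rule DERIV_chain2[OF dM DERIV_chain2[OF dF dT]])
  hence "deriv \<psi> 0 = (1 / (1 - cnj b * b)) * (deriv F a * (1 - a * cnj a))"
    by (rule DERIV_imp_deriv)
  also have "\<dots> = of_real (1 / (1 - (norm b)^2)) * (deriv F a * of_real (1 - (norm a)^2))"
    by (simp only: na nb of_real_diff of_real_1 of_real_divide)
  finally have "norm (deriv \<psi> 0) = \<bar>1 / (1 - (norm b)^2)\<bar> * (norm (deriv F a) * \<bar>1 - (norm a)^2\<bar>)"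
    by (simp only: norm_mult norm_of_real)
  hence "norm (deriv \<psi> 0) = (1 / (1 - (norm b)^2)) * (norm (deriv F a) * (1 - (norm a)^2))"
    using a2 b2 by simp
  with sch have "norm (deriv F a) * (1 - (norm a)^2) / (1 - (norm b)^2) \<le> 1" by simp
  thus ?thesis using b2 by (simp add: b_def divide_le_eq)
qed

lemma norm_minus1_lt_plus1:
  fixes q :: complex assumes "Re q > 0"
  shows "norm (q - 1) < norm (q + 1)"
proof -
  have "(norm (q - 1))^2 < (norm (q + 1))^2"
    unfolding cmod_power2 using assms by (simp add: power2_eq_square algebra_simps)
  thus ?thesis by (rule power2_less_imp_less) simp
qed

lemma schwarz_n:
  fixes \<phi> :: "complex \<Rightarrow> complex"
  assumes hol: "\<phi> holomorphic_on ball 0 1" and n: "n \<ge> 1"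
    and lt: "\<And>z. norm z < 1 \<Longrightarrow> norm (z ^ n * \<phi> z) < 1"
    and z: "norm z < 1"
  shows "norm (\<phi> z) \<le> 1"
proof (rule ccontr)
  assume "\<not> norm (\<phi> z) \<le> 1"
  hence big: "norm (\<phi> z) > 1" by simp
  define r0 where "r0 = root n (1 / norm (\<phi> z))"
  have r0: "0 \<le> r0" "r0 < 1" using big n by (auto simp: r0_def divide_less_eq)
  have r0n: "r0 ^ n = 1 / norm (\<phi> z)" using big n by (simp add: r0_def real_root_pow_pos2)
  define r where "r = (max (norm z) r0 + 1) / 2"
  have r: "norm z < r" "r0 < r" "r < 1" using r0 z by (auto simp: r_def)
  have rpos: "0 < r" using r r0 by linarith
  have "r0 ^ n < r ^ n" using r r0 n by (intro power_strict_mono) auto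
  hence rn: "1 / norm (\<phi> z) < r ^ n" using r0n by simp
  have holr: "\<phi> holomorphic_on ball 0 r" using r by (intro holomorphic_on_subset[OF hol]) auto
  have contr: "continuous_on (closure (ball 0 r)) \<phi>"
    using rpos r(3) by (intro holomorphic_on_imp_continuous_on holomorphic_on_subset[OF hol]) auto
  obtain w where w: "w \<in> frontier (ball 0 r)" and wmax: "\<And>y. y \<in> closure (ball 0 r) \<Longrightarrow> norm (\<phi> y) \<le> norm (\<phi> w)"
    using Schwarz1[OF holr contr] rpos by auto
  have nw: "norm w = r" using w rpos by (simp add: frontier_ball)
  have "norm (w ^ n * \<phi> w) < 1" using lt nw r by simp
  hence "r ^ n * norm (\<phi> w) < 1" using nw by (simp add: norm_mult norm_power)
  moreover have "norm (\<phi> z) \<le> norm (\<phi> w)" using wmax r rpos by simp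
  ultimately have "r ^ n * norm (\<phi> z) < 1" using rpos
    by (meson le_less_trans mult_left_mono zero_le_power less_imp_le)
  moreover have "1 < r ^ n * norm (\<phi> z)" using rn big by (simp add: divide_less_eq mult.commute split: if_splits)
  ultimately show False by simp
qed

lemma pow_pair: fixes r :: real assumes "0 \<le> r" "r \<le> 1"
  shows "r ^ a + r ^ b \<le> 1 + r ^ (a + b)"
proof -
  have "0 \<le> (1 - r^a) * (1 - r^b)" using assms by (intro mult_nonneg_nonneg) (auto simp: power_le_one)
  thus ?thesis by (simp add: power_add algebra_simps)
qed

lemma geo_S: fixes r :: real
  shows "(1 - r^2) * (\<Sum>k<n. r^(2*k)) = 1 - r^(2*n)"
proof (induction n)
  case (Suc n)
  have e: "r^(2*Suc n) = r^2 * r^(2*n)" by (simp add: mult_Suc_right power_add power2_eq_square)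
  have "(1 - r^2) * (\<Sum>k<Suc n. r^(2*k)) = (1 - r^2)*(\<Sum>k<n. r^(2*k)) + (1-r^2)*r^(2*n)"
    by (simp add: distrib_left)
  also have "\<dots> = 1 - r^(2*n) + (1-r^2)*r^(2*n)" using Suc.IH by simp
  also have "\<dots> = 1 - r^(2*Suc n)" unfolding e by (simp add: algebra_simps)
  finally show ?case .
qed simp

lemma rS_le: fixes r :: real assumes "0 \<le> r" "r \<le> 1"
  shows "r * (\<Sum>k<n. r^(2*k)) \<le> n"
proof -
  have "r * (\<Sum>k<n. r^(2*k)) = (\<Sum>k<n. r^(2*k+1))" by (simp add: sum_distrib_left mult.commute)
  also have "\<dots> \<le> (\<Sum>k<n. 1)" using assms by (intro sum_mono) (simp add: mult_le_one power_le_one)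
  finally show ?thesis by simp
qed

lemma rS_le2: fixes r :: real assumes "0 \<le> r" "r \<le> 1"
  shows "2 * (r * (\<Sum>k<n. r^(2*k))) \<le> n * (1 + r^(2*n))"
proof -
  have e: "r * (\<Sum>k<n. r^(2*k)) = (\<Sum>k<n. r^(2*k+1))" by (simp add: sum_distrib_left mult.commute)
  have "(\<Sum>k<n. r^(2*(n - Suc k)+1)) = (\<Sum>k<n. r^(2*k+1))"
    by (rule sum.nat_diff_reindex)
  hence "2 * (\<Sum>k<n. r^(2*k+1)) = (\<Sum>k<n. r^(2*k+1) + r^(2*(n - Suc k)+1))"
    by (simp add: sum.distrib)
  also have "\<dots> \<le> (\<Sum>k<n. 1 + r^(2*n))"
  proof (intro sum_mono)
    fix k assume "k \<in> {..<n}"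
    hence "(2*k+1) + (2*(n - Suc k)+1) = 2*n" by auto
    thus "r^(2*k+1) + r^(2*(n - Suc k)+1) \<le> 1 + r^(2*n)" using pow_pair[OF assms, of "2*k+1" "2*(n - Suc k)+1"] by simp
  qed
  finally show ?thesis by (simp add: e)
qed

lemma key_ineq:
  fixes r t s :: real and n :: nat
  assumes n: "n \<ge> 1" and r: "0 < r" "r < 1" and t: "0 \<le> t" "t \<le> 1" and s: "0 \<le> s"
    and sp: "s * (1 - r^2) \<le> 1 - t^2"
  shows "(n * r^n * t + r^(n+1) * s) / (1 - r^(2*n) * t^2) \<le> n * r^n / (1 - r^(2*n))"
proof -
  define A where "A = r^n"
  define S where "S = (\<Sum>k<n. r^(2*k))"
  have A: "0 < A" "A < 1" using r n by (auto simp: A_def power_less_one_iff)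
  have A2: "r^(2*n) = A^2" by (simp add: A_def power_mult mult.commute[of 2 n] power_mult)
  have gS: "(1 - r^2) * S = 1 - A^2" using geo_S[of r n] by (simp add: S_def A2)
  have r2: "0 < 1 - r^2" using r by (simp add: power_less_one_iff abs_less_iff)
  have d1: "0 < 1 - A^2" using A by (simp add: power_less_one_iff abs_less_iff)
  have d2: "0 < 1 - A^2 * t^2"
  proof -
    have "A^2 * t^2 \<le> A^2 * 1" using t by (intro mult_left_mono) (auto simp: power_le_one)
    thus ?thesis using d1 by simp
  qed
  have rS1: "r * S \<le> n" unfolding S_def using r by (intro rS_le) auto
  have rS2: "2 * (r * S) \<le> n * (1 + A^2)" unfolding S_def using rS_le2[of r n] r by (simp add: A2)
  have "r * (1 + t) * S = (1 - t) * (r * S) + t * (2 * (r * S))" by (simp add: algebra_simps)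
  also have "\<dots> \<le> (1 - t) * n + t * (n * (1 + A^2))"
    using t rS1 rS2 by (intro add_mono mult_left_mono) auto
  finally have c1: "r * (1 + t) * S \<le> n * (1 + A^2 * t)" by (simp add: algebra_simps)
  have ss: "s * (1 - A^2) \<le> (1 - t^2) * S"
  proof -
    have "s * (1 - A^2) = s * (1 - r^2) * S" by (simp only: mult.assoc gS)
    also have "\<dots> \<le> (1 - t^2) * S" using sp S_def by (intro mult_right_mono) (auto intro: sum_nonneg)
    finally show ?thesis .
  qed
  have main: "(n * t + r * s) * (1 - A^2) \<le> n * (1 - A^2 * t^2)"
  proof -
    have "(n * t + r * s) * (1 - A^2) = n * t * (1 - A^2) + r * (s * (1 - A^2))" by (simp add: algebra_simps)
    also have "\<dots> \<le> n * t * (1 - A^2) + r * ((1 - t^2) * S)" using ss r by (intro add_left_mono mult_left_mono) auto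
    also have "\<dots> = n * t * (1 - A^2) + (1 - t) * (r * (1 + t) * S)" by (simp add: power2_eq_square algebra_simps)
    also have "\<dots> \<le> n * t * (1 - A^2) + (1 - t) * (n * (1 + A^2 * t))" using t c1 by (intro add_left_mono mult_left_mono) auto
    also have "n * t * (1 - A^2) + (1 - t) * (n * (1 + A^2 * t)) = n * (1 - A^2 * t^2)"
      by (simp add: power2_eq_square algebra_simps)
    finally show ?thesis .
  qed
  have "(n * A * t + r * A * s) * (1 - A^2) \<le> n * A * (1 - A^2 * t^2)"
    using mult_left_mono[OF main, of A] A by (simp add: algebra_simps)
  hence "(n * A * t + r * A * s) / (1 - A^2 * t^2) \<le> n * A / (1 - A^2)"
    using d1 d2 by (simp add: divide_simps)
  thus ?thesis by (simp add: A2 A_def mult.commute[of r] power_Suc2 mult.assoc)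
qed

lemma Schwarz_Pick_le:
  fixes \<phi> :: "complex \<Rightarrow> complex"
  assumes hol: "\<phi> holomorphic_on ball 0 1" and le: "\<And>z. norm z < 1 \<Longrightarrow> norm (\<phi> z) \<le> 1"
    and a: "norm a < 1"
  shows "norm (deriv \<phi> a) * (1 - (norm a)^2) \<le> 1 - (norm (\<phi> a))^2"
proof (cases "\<exists>z0. norm z0 < 1 \<and> norm (\<phi> z0) = 1")
  case True
  then obtain z0 where z0: "norm z0 < 1" "norm (\<phi> z0) = 1" by blast
  have "\<phi> constant_on ball 0 1"
    by (rule maximum_modulus_principle[OF hol, of "ball 0 1" z0]) (use z0 le in auto)
  then obtain c where c: "\<And>z. z \<in> ball 0 1 \<Longrightarrow> \<phi> z = c" by (auto simp: constant_on_def)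
  have c1: "norm c = 1" using c z0 by force
  have "deriv \<phi> a = deriv (\<lambda>_. c) a"
  proof (rule deriv_cong_ev[OF _ refl])
    have "eventually (\<lambda>z. z \<in> ball (0::complex) 1) (nhds a)"
      using a by (intro eventually_nhds_in_open) auto
    thus "eventually (\<lambda>z. \<phi> z = c) (nhds a)" by eventually_elim (use c in auto)
  qed
  hence "deriv \<phi> a = 0" by simp
  moreover have "\<phi> a = c" using c a by simp
  ultimately show ?thesis using c1 by simp
next
  case False
  hence "\<And>z. norm z < 1 \<Longrightarrow> norm (\<phi> z) < 1" using le by (meson le_less)
  thus ?thesis by (rule Schwarz_Pick_deriv[OF hol _ a])
qed

lemma dq_alg: "1 - w * f \<noteq> 0 \<Longrightarrow> (z::complex) \<noteq> 0 \<Longrightarrow> ((c * w * f / z + d * w) * (1 - w * f) -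
      (1 + w * f) * (- (c * w * f / z) - d * w)) /
     ((1 - w * f) * (1 - w * f)) =
     2 * (c * w / z * f + w * d) / (1 - w * f)\<^sup>2"
  by (simp add: power2_eq_square divide_simps) (simp add: algebra_simps)

lemma P_bound:
  fixes p :: "complex \<Rightarrow> complex" and z :: complex
  assumes n: "n \<ge> 1" and pP: "p \<in> P_class n" and z: "norm z < 1" "z \<noteq> 0"
  shows "norm (z * deriv p z / p z) \<le> 2 * n * norm z ^ n / (1 - norm z ^ (2*n))"
proof -
  define B where "B = ball (0::complex) 1"
  have phol: "p holomorphic_on B" and p0: "p 0 = 1"
    and hd: "\<And>k. 1 \<le> k \<Longrightarrow> k < n \<Longrightarrow> (deriv ^^ k) p 0 = 0"
    and re: "\<And>z. z \<in> B \<Longrightarrow> Re (p z) > 0"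
    using pP unfolding P_class_def B_def by auto
  have ghd: "(deriv ^^ k) (\<lambda>z. p z - 1) 0 = 0" if "k < n" for k
  proof (cases "k = 0")
    case True thus ?thesis by (simp add: p0)
  next
    case False
    have "(deriv ^^ k) (\<lambda>z. p z - 1) 0 = (deriv ^^ k) p 0 - (deriv ^^ k) (\<lambda>z. 1) 0"
      by (rule higher_deriv_diff[OF phol]) (auto simp: B_def)
    thus ?thesis using False hd[of k] that by simp
  qed
  have ghol: "(\<lambda>z. p z - 1) holomorphic_on ball 0 1" using phol by (auto simp: B_def intro!: holomorphic_intros)
  obtain h where hhol: "h holomorphic_on ball 0 1" and heq: "\<And>z. z \<in> ball 0 1 \<Longrightarrow> p z - 1 = z ^ n * h z"
    using factor_zpow[OF ghol, of n] ghd by blast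
  have pnz: "p u + 1 \<noteq> 0" if "u \<in> B" for u
  proof
    assume "p u + 1 = 0"
    hence "Re (p u + 1) = 0" by simp
    thus False using re[OF that] by simp
  qed
  have pnz0: "p u \<noteq> 0" if "u \<in> B" for u using re[OF that] by auto
  define \<phi> where "\<phi> = (\<lambda>u. h u / (p u + 1))"
  have \<phi>hol: "\<phi> holomorphic_on ball 0 1" unfolding \<phi>_def using hhol phol pnz
    by (intro holomorphic_intros) (auto simp: B_def)
  have Wid: "u ^ n * \<phi> u = (p u - 1) / (p u + 1)" if "u \<in> B" for u
    using heq[of u] that by (simp add: \<phi>_def B_def)
  have Wlt: "norm (u ^ n * \<phi> u) < 1" if "norm u < 1" for u
  proof -
    have uB: "u \<in> B" using that by (simp add: B_def)
    have "norm (p u - 1) < norm (p u + 1)" using re[OF uB] by (rule norm_minus1_lt_plus1)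
    thus ?thesis using Wid[OF uB] pnz[OF uB] by (simp add: norm_divide divide_less_eq)
  qed
  have \<phi>le: "norm (\<phi> u) \<le> 1" if "norm u < 1" for u
    by (rule schwarz_n[OF \<phi>hol n Wlt that])
  have SP: "norm (deriv \<phi> z) * (1 - (norm z)^2) \<le> 1 - (norm (\<phi> z))^2"
    by (rule Schwarz_Pick_le[OF \<phi>hol \<phi>le z(1)])
  define Q where "Q = (\<lambda>u. (1 + u ^ n * \<phi> u) / (1 - u ^ n * \<phi> u))"
  have pQ: "p u = Q u" if "u \<in> B" for u
  proof -
    have "Q u = (1 + (p u - 1) / (p u + 1)) / (1 - (p u - 1) / (p u + 1))" by (simp add: Q_def Wid[OF that])
    also have "\<dots> = p u" using pnz[OF that] by (simp add: divide_simps; simp add: algebra_simps)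
    finally show ?thesis by simp
  qed
  have zB: "z \<in> B" using z by (simp add: B_def)
  define w where "w = z ^ n"
  define V where "V = w * \<phi> z"
  define V' where "V' = of_nat n * w / z * \<phi> z + w * deriv \<phi> z"
  have V1: "1 - V \<noteq> 0" "1 + V \<noteq> 0"
  proof -
    have "norm V < 1" using Wlt[OF z(1)] by (simp add: V_def w_def)
    thus "1 - V \<noteq> 0" "1 + V \<noteq> 0" by (auto simp: add_eq_0_iff)
  qed
  have dQ: "(Q has_field_derivative (2 * V' / (1 - V)^2)) (at z)"
  proof -
    define P where "P = (\<lambda>u::complex. u^n)"
    have dP: "(P has_field_derivative (of_nat n * w / z)) (at z)"
    proof -
      have "(P has_field_derivative (of_nat n * z^(n-1))) (at z)" unfolding P_def
        by (rule derivative_eq_intros refl | simp)+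
      moreover have "z^(n-1) = w / z" using z(2) n by (simp add: w_def power_diff)
      ultimately show ?thesis by simp
    qed
    have d\<phi>: "(\<phi> has_field_derivative deriv \<phi> z) (at z)"
      using \<phi>hol z by (intro holomorphic_derivI) auto
    have Qe: "Q = (\<lambda>u. (1 + P u * \<phi> u) / (1 - P u * \<phi> u))" by (simp add: Q_def P_def)
    have Pz: "P z = w" by (simp add: P_def w_def)
    have V1': "1 - w * \<phi> z \<noteq> 0" "1 + w * \<phi> z \<noteq> 0" using V1 by (auto simp: V_def)
    show ?thesis unfolding Qe
      apply (auto intro!: derivative_eq_intros dP d\<phi> simp: Pz)
      using V1' apply simp
      unfolding V'_def V_def by (rule dq_alg[OF V1'(1) z(2)])
  qed
  have "eventually (\<lambda>u. p u = Q u) (nhds z)"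
  proof -
    have "eventually (\<lambda>u. u \<in> B) (nhds z)" using zB by (intro eventually_nhds_in_open) (auto simp: B_def)
    thus ?thesis by eventually_elim (rule pQ)
  qed
  hence dp: "deriv p z = 2 * V' / (1 - V)^2"
    using DERIV_imp_deriv[OF dQ] by (simp add: deriv_cong_ev)
  have pz: "p z = (1 + V) / (1 - V)" using pQ[OF zB] by (simp add: Q_def V_def w_def)
  have VV: "V * V \<noteq> 1"
  proof
    assume "V * V = 1"
    hence "(1 - V) * (1 + V) = 0" by (simp add: algebra_simps)
    thus False using V1 by simp
  qed
  have E: "z * deriv p z / p z = 2 * (of_nat n * w * \<phi> z + z * w * deriv \<phi> z) / (1 - V^2)"
    unfolding dp pz V'_def using V1 z(2) VV
    by (simp add: power2_eq_square divide_simps) (simp add: algebra_simps)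
  define r where "r = norm z"
  define t where "t = norm (\<phi> z)"
  define s where "s = norm (deriv \<phi> z)"
  have r: "0 < r" "r < 1" using z by (auto simp: r_def)
  have t: "0 \<le> t" "t \<le> 1" using \<phi>le[OF z(1)] by (auto simp: t_def)
  have nw: "norm w = r ^ n" by (simp add: w_def r_def norm_power)
  have num: "norm (of_nat n * w * \<phi> z + z * w * deriv \<phi> z) \<le> n * r^n * t + r^(n+1) * s"
  proof -
    have "norm (of_nat n * w * \<phi> z + z * w * deriv \<phi> z) \<le> norm (of_nat n * w * \<phi> z) + norm (z * w * deriv \<phi> z)"
      by (rule norm_triangle_ineq)
    also have "\<dots> = n * r^n * t + r^(n+1) * s"
      by (simp add: norm_mult nw t_def s_def r_def norm_of_nat)
    finally show ?thesis .
  qed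
  have nV: "norm V = r^n * t" by (simp add: V_def norm_mult nw t_def)
  have r2n: "r^(2*n) = (r^n)^2" by (simp add: power_mult mult.commute[of 2 n])
  have den0: "0 < 1 - r^(2*n) * t^2"
  proof -
    have "norm V < 1" using Wlt[OF z(1)] by (simp add: V_def w_def)
    hence "(r^n * t)^2 < 1" unfolding nV[symmetric] by (simp add: power_less_one_iff)
    thus ?thesis by (simp add: r2n power_mult_distrib)
  qed
  have den: "1 - r^(2*n) * t^2 \<le> norm (1 - V^2)"
  proof -
    have "1 - norm (V^2) \<le> norm (1 - V^2)" by (metis norm_one norm_triangle_ineq2)
    thus ?thesis by (simp add: norm_power nV r2n power_mult_distrib)
  qed
  have "norm (z * deriv p z / p z) = 2 * norm (of_nat n * w * \<phi> z + z * w * deriv \<phi> z) / norm (1 - V^2)"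
    unfolding E by (simp only: norm_divide norm_mult norm_numeral)
  also have "\<dots> \<le> 2 * (n * r^n * t + r^(n+1) * s) / (1 - r^(2*n) * t^2)"
    using num den den0 r by (intro frac_le) (auto intro!: add_nonneg_nonneg mult_nonneg_nonneg simp: s_def t)
  also have "\<dots> = 2 * ((n * r^n * t + r^(n+1) * s) / (1 - r^(2*n) * t^2))" by simp
  also have "\<dots> \<le> 2 * (n * r^n / (1 - r^(2*n)))"
  proof -
    have "s * (1 - r^2) \<le> 1 - t^2" using SP by (simp add: s_def t_def r_def)
    hence "(n * r^n * t + r^(n+1) * s) / (1 - r^(2*n) * t^2) \<le> n * r^n / (1 - r^(2*n))"
      using key_ineq[OF n r t _ ] by (simp add: s_def)
    thus ?thesis by (rule mult_left_mono) simp
  qed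
  finally show ?thesis by (simp add: r_def)
qed

lemma rot_pow:
  assumes n: "n \<ge> 1"
  shows "(complex_of_real t * exp (\<i> * of_real (pi / n))) ^ n = - complex_of_real (t ^ n)"
proof -
  have "exp (\<i> * of_real (pi / n)) ^ n = exp (of_nat n * (\<i> * of_real (pi / n)))"
    by (rule exp_of_nat_mult[symmetric])
  also have "of_nat n * (\<i> * of_real (pi / n)) = \<i> * of_real pi" using n by (simp add: field_simps)
  finally have "exp (\<i> * of_real (pi / n)) ^ n = -1" by simp
  thus ?thesis by (simp add: power_mult_distrib)
qed

lemma rot_norm: "norm (complex_of_real t * exp (\<i> * of_real (pi / n))) = \<bar>t\<bar>"
  by (simp add: norm_mult)

lemma a_facts:
  fixes n :: nat and a :: real assumes n: "n \<ge> 1"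
  defines "a \<equiv> 2 / (3 * real n + sqrt (9 * (real n)^2 + 4))"
  shows "0 < a" "a < 1" "a^2 + 3 * n * a = 1"
proof -
  define q where "q = sqrt (9 * (real n)^2 + 4)"
  have q2: "q^2 = 9 * (real n)^2 + 4" by (simp add: q_def)
  have q0: "q \<ge> 2"
  proof -
    have "sqrt 4 \<le> q" unfolding q_def by (intro real_sqrt_le_mono) simp
    thus ?thesis by simp
  qed
  have den: "3 * real n + q > 2" using q0 n by simp
  show "0 < a" using den by (simp add: a_def q_def[symmetric])
  show "a < 1" using den by (simp add: a_def q_def[symmetric])
  show "a^2 + 3 * n * a = 1"
  proof -
    define D where "D = 3 * real n + q"
    have aD: "a = 2 / D" by (simp add: a_def D_def q_def)
    have D0: "D > 0" using den by (simp add: D_def)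
    have D2: "D^2 = 4 + 6 * n * D" using q2 by (simp add: D_def power2_eq_square algebra_simps)
    have "a^2 + 3 * n * a = (4 + 6 * n * D) / D^2" using D0 by (simp add: aD power2_eq_square field_simps)
    also have "\<dots> = 1"
    proof -
      have "0 < 4 + 6 * real n * D" using D0 by (simp add: add_pos_nonneg)
      thus ?thesis by (simp add: D2)
    qed
    finally show ?thesis .
  qed
qed

lemma g_lt:
  fixes n :: nat and a x :: real
  assumes "0 \<le> x" "x < a" "a < 1" "a^2 + 3 * n * a = 1"
  shows "2 * n * x / (1 - x ^ 2) < 2/3"
proof -
  have "x^2 + 3 * n * x < a^2 + 3 * n * a"
    using assms by (intro add_less_le_mono power_strict_mono mult_left_mono) auto
  hence "3 * n * x < 1 - x^2" using assms by simp
  moreover have "0 < 1 - x^2" using assms by (simp add: power_less_one_iff abs_less_iff)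
  ultimately show ?thesis by (simp add: divide_simps)
qed

lemma g_gt:
  fixes n :: nat and a x :: real
  assumes "0 < a" "a < x" "x < 1" "a^2 + 3 * n * a = 1"
  shows "2 * n * x / (1 - x ^ 2) > 2/3"
proof -
  have "x^2 + 3 * n * x > a^2 + 3 * n * a"
    using assms by (intro add_less_le_mono power_strict_mono mult_left_mono) auto
  hence "3 * n * x > 1 - x^2" using assms by simp
  moreover have "0 < 1 - x^2" using assms by (simp add: power_less_one_iff abs_less_iff)
  ultimately show ?thesis by (simp add: divide_simps)
qed

lemma Qf_rot:
  assumes n: "n \<ge> 1" and t: "0 < t" "t < 1"
  shows "Qf (f0 n) (complex_of_real t * exp (\<i> * of_real (pi / n))) =
         complex_of_real (1 - 2 * n * t^n / (1 - (t^n)^2))"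
proof -
  define z where "z = complex_of_real t * exp (\<i> * of_real (pi / n))"
  have nz: "norm z = t" unfolding z_def rot_norm using t by simp
  have zn: "z ^ n = - complex_of_real (t ^ n)" unfolding z_def by (rule rot_pow[OF n])
  have tn: "t^n < 1" using t n by (simp add: power_less_one_iff)
  have z0: "z \<noteq> 0" using nz t by auto
  have z1: "1 + z ^ n \<noteq> 0"
  proof
    assume "1 + z^n = 0"
    hence "complex_of_real (t^n) = 1" using zn by (simp add: add_eq_0_iff)
    hence "t^n = 1" by (metis of_real_eq_1_iff)
    thus False using tn by simp
  qed
  have "Qf (f0 n) z = 1 + 2 * of_nat n * z ^ n / (1 - z ^ (2*n))"
    by (rule Qf_f0[OF n]) (use nz t z0 z1 in auto)
  also have "z ^ (2*n) = complex_of_real ((t^n)^2)"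
    by (simp add: power_mult mult.commute[of 2 n] zn power2_eq_square)
  also have "1 + 2 * of_nat n * z ^ n / (1 - complex_of_real ((t^n)^2)) =
             complex_of_real (1 - 2 * n * t^n / (1 - (t^n)^2))"
    by (simp add: zn)
  finally show ?thesis by (simp add: z_def)
qed

theorem mainTheorem11:
  fixes n :: nat
  assumes "n \<ge> 1"
  defines "\<rho> \<equiv> (2 / (3 * real n + sqrt (9 * (real n)^2 + 4))) powr (1 / real n)"
  shows "radius_SNe (W_class n) \<rho> \<and>
         (\<lambda>z. z * (1 + z ^ n) / (1 - z ^ n)) \<in> W_class n \<and>
         (\<exists>z. cmod z = \<rho> \<and> Qf (\<lambda>z. z * (1 + z ^ n) / (1 - z ^ n)) z \<in> frontier OmegaNe)"
proof -
  note n = assms(1)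
  define a where "a = 2 / (3 * real n + sqrt (9 * (real n)^2 + 4))"
  have a: "0 < a" "a < 1" "a^2 + 3 * n * a = 1" using a_facts[OF n] by (simp_all add: a_def)
  have \<rho>a: "\<rho> = a powr (1 / real n)" by (simp add: \<rho>_def a_def)
  have \<rho>0: "0 < \<rho>" using a by (simp add: \<rho>a)
  have \<rho>1: "\<rho> < 1"
  proof -
    have "a powr (1 / real n) < 1 powr (1 / real n)" using a n by (intro powr_less_mono2) auto
    thus ?thesis by (simp add: \<rho>a)
  qed
  have \<rho>n: "\<rho> ^ n = a"
  proof -
    have "\<rho> ^ n = a powr (real n * (1 / real n))" unfolding \<rho>a using a by (simp add: powr_power)
    also have "\<dots> = a" using n a(1) by simp
    finally show ?thesis .
  qed
  have F0: "(\<lambda>z. z * (1 + z ^ n) / (1 - z ^ n)) = f0 n" by (simp add: f0_def)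
  have f0W: "f0 n \<in> W_class n" by (rule f0_in_W[OF n])
  have incl: "Qf f ` ball 0 \<rho> \<subseteq> OmegaNe" if fW: "f \<in> W_class n" for f
  proof
    fix y assume "y \<in> Qf f ` ball 0 \<rho>"
    then obtain z where zr: "norm z < \<rho>" and y: "y = Qf f z" by auto
    from fW obtain p where pP: "p \<in> P_class n" and feq: "\<And>u. u \<in> ball 0 1 \<Longrightarrow> f u = u * p u"
      unfolding W_class_def by auto
    have phol: "p holomorphic_on ball 0 1" and re: "\<And>u. u \<in> ball 0 1 \<Longrightarrow> Re (p u) > 0"
      using pP unfolding P_class_def by auto
    have z1: "norm z < 1" using zr \<rho>1 by simp
    show "y \<in> OmegaNe"
    proof (cases "z = 0")
      case True
      thus ?thesis using disc_in_Omega[of 0] by (simp add: y Qf_def)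
    next
      case False
      have zB: "z \<in> ball 0 1" using z1 by simp
      have pz: "p z \<noteq> 0" using re[OF zB] by auto
      have "eventually (\<lambda>u. f u = u * p u) (nhds z)"
      proof -
        have "eventually (\<lambda>u. u \<in> ball (0::complex) 1) (nhds z)" using zB by (intro eventually_nhds_in_open) auto
        thus ?thesis by eventually_elim (rule feq)
      qed
      hence "deriv f z = deriv (\<lambda>u. u * p u) z" by (rule deriv_cong_ev) simp
      also have "((\<lambda>u. u * p u) has_field_derivative (p z + z * deriv p z)) (at z)"
        using phol zB by (auto intro!: derivative_eq_intros holomorphic_derivI)
      hence "deriv (\<lambda>u. u * p u) z = p z + z * deriv p z" by (rule DERIV_imp_deriv)
      finally have df: "deriv f z = p z + z * deriv p z" .
      have Q: "Qf f z = 1 + z * deriv p z / p z"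
        using False pz by (simp add: Qf_def df feq[OF zB] field_simps)
      define r where "r = norm z"
      have r: "0 \<le> r" "r < \<rho>" using zr by (auto simp: r_def)
      have rn: "r^n < a" using r n \<rho>n \<rho>0 by (metis power_strict_mono not_one_le_zero le_zero_eq less_one not_less)
      have "norm (z * deriv p z / p z) \<le> 2 * n * r ^ n / (1 - r ^ (2*n))"
        using P_bound[OF n pP z1 False] by (simp add: r_def)
      also have "\<dots> = 2 * n * (r^n) / (1 - (r^n)^2)" by (simp add: power_mult mult.commute[of 2 n])
      also have "\<dots> < 2/3" using g_lt[of "r^n" a n] rn a r by simp
      finally have "norm (z * deriv p z / p z) < 2/3" .
      thus ?thesis using disc_in_Omega y Q by simp
    qed
  qed
  define S where "S = {r. 0 < r \<and> r \<le> 1 \<and> (\<forall>f\<in>W_class n. Qf f ` ball 0 r \<subseteq> OmegaNe)}"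
  have \<rho>S: "\<rho> \<in> S" using \<rho>0 \<rho>1 incl by (auto simp: S_def)
  have maxS: "r \<le> \<rho>" if rS: "r \<in> S" for r
  proof (rule ccontr)
    assume "\<not> r \<le> \<rho>"
    hence rr: "\<rho> < r" by simp
    have r1: "r \<le> 1" and sub: "Qf (f0 n) ` ball 0 r \<subseteq> OmegaNe" using rS f0W by (auto simp: S_def)
    define t where "t = (\<rho> + r) / 2"
    have t: "\<rho> < t" "t < r" "0 < t" "t < 1" using rr r1 \<rho>0 by (auto simp: t_def)
    have tn: "a < t^n"
    proof -
      have "\<rho>^n < t^n" using t \<rho>0 n by (intro power_strict_mono) auto
      thus ?thesis using \<rho>n by simp
    qed
    have tn1: "t^n < 1" using t n by (simp add: power_less_one_iff)
    define z where "z = complex_of_real t * exp (\<i> * of_real (pi / n))"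
    have "norm z < r" unfolding z_def rot_norm using t by simp
    hence "Qf (f0 n) z \<in> OmegaNe" using sub by auto
    moreover have "Qf (f0 n) z = complex_of_real (1 - 2 * real n * t^n / (1 - (t^n)^2))"
      unfolding z_def using Qf_rot[OF n t(3,4)] .
    moreover have "1 - 2 * real n * t^n / (1 - (t^n)^2) \<le> 1/3"
      using g_gt[of a "t^n" n] a tn tn1 by simp
    ultimately show False using Omega_real by metis
  qed
  have rad: "radius_SNe (W_class n) \<rho>"
    unfolding radius_SNe_def Let_def using \<rho>S maxS by (simp add: S_def)
  have fr: "\<exists>z. cmod z = \<rho> \<and> Qf (f0 n) z \<in> frontier OmegaNe"
  proof (intro exI conjI)
    let ?z = "complex_of_real \<rho> * exp (\<i> * of_real (pi / n))"
    show "cmod ?z = \<rho>" unfolding rot_norm using \<rho>0 by simp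
    have "Qf (f0 n) ?z = complex_of_real (1 - 2 * real n * \<rho>^n / (1 - (\<rho>^n)^2))"
      by (rule Qf_rot[OF n \<rho>0 \<rho>1])
    also have "1 - 2 * real n * \<rho>^n / (1 - (\<rho>^n)^2) = 1/3"
    proof -
      have e: "1 - a^2 = 3 * real n * a" using a(3) by simp
      have p: "0 < real n * a" using a n by simp
      have "1 - 2 * real n * \<rho>^n / (1 - (\<rho>^n)^2) = 1 - 2 * (real n * a) / (3 * (real n * a))"
        unfolding \<rho>n e by (simp add: mult.assoc)
      also have "\<dots> = 1/3" using p a n by (simp add: field_simps)
      finally show ?thesis .
    qed
    finally have eq: "Qf (f0 n) ?z = complex_of_real (1/3)" .
    show "Qf (f0 n) ?z \<in> frontier OmegaNe" unfolding eq by (rule third_frontier)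
  qed
  show ?thesis using rad f0W fr by (simp add: F0)
qed

end
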